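(* Let $F:\mathbb{R}^n\to\mathbb{R}$ be convex and $1$-smooth, let $x^\star$ be a minimizer of $F$ and $F^\star=F(x^\star)$. Let $k\ge1$, $N=2^k-1$, and let $(h_0,\dots,h_{N-1})=\pi_k$ be the silver stepsize schedule. Let $x^0\in\mathbb{R}^n$ and $x^{i+1}=x^i-h_i\nabla F(x^i)$ for $i=0,\dots,N-1$. Then, with $\rho=1+\sqrt2$ and writing $Q_i=F^\star-F(x^i)-\langle\nabla F(x^i),x^\star-x^i\rangle-\tfrac12\|\nabla F(x^i)\|^2$, $$(2\rho^k-1)\big(F^\star-F(x^N)\big)+\tfrac12\|x^0-x^\star\|^2-\sum_{i=0}^{N-1}h_iQ_i-\rho^kQ_N-\tfrac12\big\|x^N-\rho^k\nabla F(x^N)-x^\star\big\|^2\ge0.$$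
   Context: A differentiable convex function $F$ is $1$-smooth if $\nabla F$ is $1$-Lipschitz (equivalently $\nabla F$ is $1$-cocoercive). The silver ratio is $\rho=1+\sqrt2$. The silver stepsize schedule $\pi_k\in\mathbb{R}^{2^k-1}$ is defined recursively by $\pi_1=(\sqrt2)$ and $\pi_{k+1}=(\pi_k,\ 1+\rho^{k-1},\ \pi_k)$ (concatenation). *)

theory Defs
  imports "HOL-Analysis.Analysis"
begin

definition silver_ratio :: real where
  "silver_ratio = 1 + sqrt 2"

fun silver_schedule :: "nat \<Rightarrow> real list" where
  "silver_schedule 0 = []"
| "silver_schedule (Suc 0) = [sqrt 2]"
| "silver_schedule (Suc (Suc k)) =
     silver_schedule (Suc k) @ [1 + silver_ratio ^ k] @ silver_schedule (Suc k)"

fun gd_iter :: "('a::real_normed_vector \<Rightarrow> 'a) \<Rightarrow> real list \<Rightarrow> 'a \<Rightarrow> nat \<Rightarrow> 'a" where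
  "gd_iter G hs x0 0 = x0"
| "gd_iter G hs x0 (Suc i) =
     gd_iter G hs x0 i - (hs ! i) *\<^sub>R G (gd_iter G hs x0 i)"

end

theory Submission
  imports Defs
begin


lemma line_deriv:
  fixes F :: "'a::euclidean_space \<Rightarrow> real"
  assumes grad: "\<And>x. (F has_derivative (\<lambda>h. G x \<bullet> h)) (at x)"
  shows "((\<lambda>t. F (x + t *\<^sub>R d)) has_real_derivative (G (x + t *\<^sub>R d) \<bullet> d)) (at t)"
proof -
  have l: "((\<lambda>t. x + t *\<^sub>R d) has_derivative (\<lambda>s. s *\<^sub>R d)) (at t)"
    by (auto intro!: derivative_eq_intros)
  have "((\<lambda>t. F (x + t *\<^sub>R d)) has_derivative (\<lambda>s. G (x + t *\<^sub>R d) \<bullet> (s *\<^sub>R d))) (at t)"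
    using has_derivative_compose[OF l grad] by simp
  moreover have "(\<lambda>s. G (x + t *\<^sub>R d) \<bullet> (s *\<^sub>R d)) = (*) (G (x + t *\<^sub>R d) \<bullet> d)"
    by (auto simp: fun_eq_iff)
  ultimately show ?thesis by (simp add: has_field_derivative_def)
qed

lemma descent:
  fixes F :: "'a::euclidean_space \<Rightarrow> real"
  assumes grad: "\<And>x. (F has_derivative (\<lambda>h. G x \<bullet> h)) (at x)"
    and smooth: "\<And>x y. norm (G x - G y) \<le> norm (x - y)"
  shows "F y \<le> F x + G x \<bullet> (y - x) + 1/2 * (norm (y - x))\<^sup>2"
proof -
  define d where "d = y - x"
  define psi where "psi t = F (x + t *\<^sub>R d) - t * (G x \<bullet> d) - t\<^sup>2 / 2 * (norm d)\<^sup>2" for t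
  have D: "DERIV psi t :> G (x + t *\<^sub>R d) \<bullet> d - G x \<bullet> d - t * (norm d)\<^sup>2" for t
    unfolding psi_def
    by (auto intro!: derivative_eq_intros line_deriv[OF grad] simp: power2_eq_square)
  have nonpos: "G (x + t *\<^sub>R d) \<bullet> d - G x \<bullet> d - t * (norm d)\<^sup>2 \<le> 0" if "0 \<le> t" for t
  proof -
    have "G (x + t *\<^sub>R d) \<bullet> d - G x \<bullet> d = (G (x + t *\<^sub>R d) - G x) \<bullet> d"
      by (simp add: inner_diff_left)
    also have "\<dots> \<le> norm (G (x + t *\<^sub>R d) - G x) * norm d"
      by (rule norm_cauchy_schwarz)
    also have "\<dots> \<le> norm ((x + t *\<^sub>R d) - x) * norm d"
      by (rule mult_right_mono[OF smooth]) simp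
    also have "\<dots> = t * (norm d)\<^sup>2" using that by (simp add: power2_eq_square)
    finally show ?thesis by simp
  qed
  have "psi 1 \<le> psi 0"
  proof (rule DERIV_nonpos_imp_nonincreasing[of 0 1 psi])
    fix t :: real assume "0 \<le> t" "t \<le> 1"
    show "\<exists>y. DERIV psi t :> y \<and> y \<le> 0"
      using D[of t] nonpos[OF \<open>0 \<le> t\<close>] by fast
  qed simp
  then show ?thesis unfolding psi_def d_def by simp
qed

lemma tangent:
  fixes F :: "'a::euclidean_space \<Rightarrow> real"
  assumes convex: "convex_on UNIV F"
    and grad: "\<And>x. (F has_derivative (\<lambda>h. G x \<bullet> h)) (at x)"
  shows "F x + G x \<bullet> (y - x) \<le> F y"
proof -
  define d where "d = y - x"
  define g where "g t = F (x + t *\<^sub>R d)" for t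
  have cg: "convex_on UNIV g"
  proof (rule convex_onI)
    fix u a b :: real assume u: "0 < u" "u < 1"
    have "x + ((1 - u) *\<^sub>R a + u *\<^sub>R b) *\<^sub>R d = (1 - u) *\<^sub>R (x + a *\<^sub>R d) + u *\<^sub>R (x + b *\<^sub>R d)"
      by (simp add: algebra_simps)
    then show "g ((1 - u) *\<^sub>R a + u *\<^sub>R b) \<le> (1 - u) * g a + u * g b"
      unfolding g_def using convex_onD[OF convex, of u] u by simp
  qed simp
  have "g 1 - g 0 \<ge> (G (x + 0 *\<^sub>R d) \<bullet> d) * (1 - 0)"
    by (rule convex_on_imp_above_tangent[OF cg]) (use line_deriv[OF grad, of x d 0] in \<open>auto simp: g_def[abs_def]\<close>)
  then show ?thesis unfolding g_def d_def by simp
qed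

lemma coco:
  fixes F :: "'a::euclidean_space \<Rightarrow> real"
  assumes convex: "convex_on UNIV F"
    and grad: "\<And>x. (F has_derivative (\<lambda>h. G x \<bullet> h)) (at x)"
    and smooth: "\<And>x y. norm (G x - G y) \<le> norm (x - y)"
  shows "F x + G x \<bullet> (y - x) + 1/2 * (norm (G y - G x))\<^sup>2 \<le> F y"
proof -
  define z where "z = y - (G y - G x)"
  have t: "F x + G x \<bullet> (z - x) \<le> F z" by (rule tangent[OF convex grad])
  have d: "F z \<le> F y + G y \<bullet> (z - y) + 1/2 * (norm (z - y))\<^sup>2" by (rule descent[OF grad smooth])
  have "G x \<bullet> (z - x) = G x \<bullet> (y - x) - G x \<bullet> (G y - G x)" unfolding z_def
    by (simp add: inner_diff_right)
  moreover have "G y \<bullet> (z - y) = - (G y \<bullet> (G y - G x))" unfolding z_def by (simp add: inner_diff_right)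
  moreover have "(norm (z - y))\<^sup>2 = (G y - G x) \<bullet> (G y - G x)"
  proof -
    have "z - y = - (G y - G x)" unfolding z_def by simp
    then show ?thesis by (simp only: power2_norm_eq_inner inner_minus_left inner_minus_right minus_minus)
  qed
  moreover have "(norm (G y - G x))\<^sup>2 = (G y - G x) \<bullet> (G y - G x)"
    by (simp add: power2_norm_eq_inner)
  moreover have "(G y - G x) \<bullet> (G y - G x) = G y \<bullet> (G y - G x) - G x \<bullet> (G y - G x)"
    by (simp add: inner_diff_left)
  ultimately show ?thesis using t d by linarith
qed



lemma rho_sq: "silver_ratio^2 = 2 * silver_ratio + 1"
  by (simp add: silver_ratio_def power2_eq_square algebra_simps)

lemma rho_gt1: "silver_ratio > 1"
  by (simp add: silver_ratio_def)

lemma sched_Suc: "k \<ge> 1 \<Longrightarrow> silver_schedule (Suc k) =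
   silver_schedule k @ [1 + silver_ratio ^ (k - 1)] @ silver_schedule k"
  by (cases k) auto

lemma sched_len: "k \<ge> 1 \<Longrightarrow> length (silver_schedule k) = 2^k - 1"
proof (induction k rule: nat_induct_at_least)
  case base then show ?case by simp
next
  case (Suc k)
  have "(2::nat)^k \<ge> 1" by simp
  then show ?case using Suc by (simp add: sched_Suc)
qed

lemma sched_pos: "h \<in> set (silver_schedule k) \<Longrightarrow> h > 0"
proof (induction k arbitrary: h rule: silver_schedule.induct)
  case (3 k)
  have "0 < 1 + silver_ratio ^ k" using rho_gt1 by (simp add: add_pos_pos)
  with 3 show ?case by (auto simp del: silver_schedule.simps(2))
qed auto

lemma sched_sum: "k \<ge> 1 \<Longrightarrow> sum_list (silver_schedule k) = silver_ratio^k - 1"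
proof (induction k rule: nat_induct_at_least)
  case base then show ?case by (simp add: silver_ratio_def)
next
  case (Suc k)
  obtain j where j: "k = Suc j" using Suc.hyps by (cases k) auto
  have "silver_ratio ^ Suc k = silver_ratio^2 * silver_ratio ^ j" by (simp add: j power2_eq_square)
  also have "\<dots> = 2 * silver_ratio ^ k + silver_ratio ^ j" by (simp add: rho_sq j algebra_simps)
  finally show ?case using Suc by (simp add: sched_Suc j)
qed

lemma gd_app1: "i \<le> length p \<Longrightarrow> gd_iter G (p @ q) x0 i = gd_iter G p x0 i"
  by (induction i) (auto simp: nth_append)

lemma gd_app2: "gd_iter G (p @ q) x0 (length p + j) = gd_iter G q (gd_iter G p x0 (length p)) j"
  by (induction j) (auto simp: nth_append gd_app1)

lemma gd_tele: "x0 - gd_iter G hs x0 n = (\<Sum>i<n. (hs ! i) *\<^sub>R G (gd_iter G hs x0 i))"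
  by (induction n) (auto simp: algebra_simps)



definition Qf :: "('a::real_inner \<Rightarrow> real) \<Rightarrow> ('a \<Rightarrow> 'a) \<Rightarrow> 'a \<Rightarrow> 'a \<Rightarrow> real" where
  "Qf F G y z = F y - F z - G z \<bullet> (y - z) - 1/2 * (norm (G z))\<^sup>2"

definition Eform :: "('a::real_inner \<Rightarrow> real) \<Rightarrow> ('a \<Rightarrow> 'a) \<Rightarrow> real \<Rightarrow> 'a \<Rightarrow> 'a \<Rightarrow> 'a \<Rightarrow> real \<Rightarrow> real" where
  "Eform F G A x0 y xN P = (2*A-1)*(F y - F xN) + 1/2*(norm (x0 - y))\<^sup>2 - P - A * Qf F G y xN
      - 1/2*(norm (xN - A *\<^sub>R G xN - y))\<^sup>2"

lemma glue_id:
  fixes F :: "'a::real_inner \<Rightarrow> real" and G :: "'a \<Rightarrow> 'a"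
  assumes rho: "r^2 = 2*r + 1" and AB: "A = r * B" and aB: "a = 1 + B"
    and x1: "x1 = xM - a *\<^sub>R G xM"
  shows "Eform F G (r*A) x0 y xN (P1 + a * Qf F G y xM + P2)
    = Eform F G A x0 y xM P1 + Eform F G A x1 y xN P2
    + r * Eform F G A x1 xM xN SM + r * Eform F G A x1 xN xN SN
    + r * (SM - (1/2*(A-1)*(norm (G xM))\<^sup>2 - G xM \<bullet> (x1 - xN)))
    + r * (SN - (1/2*(A-1)*(norm (G xN))\<^sup>2 - G xN \<bullet> (x1 - xN)))
    + r * (F xM - (F xN + G xN \<bullet> (xM - xN) + 1/2*(norm (G xM - G xN))\<^sup>2))
    + A * (F xN - (F xM + G xM \<bullet> (xN - xM) + 1/2*(norm (G xN - G xM))\<^sup>2))"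
  unfolding Eform_def Qf_def x1 AB aB
  apply (simp add: power2_norm_eq_inner inner_diff_left inner_diff_right inner_add_left inner_add_right inner_commute power_mult_distrib power2_abs)
  using rho apply algebra
  done

lemma glue:
  fixes F :: "'a::real_inner \<Rightarrow> real" and G :: "'a \<Rightarrow> 'a"
  assumes rho: "r^2 = 2*r + 1" "r \<ge> 0" and AB: "A = r * B" and aB: "a = 1 + B" and B: "B \<ge> 0"
    and x1: "x1 = xM - a *\<^sub>R G xM"
    and e1: "Eform F G A x0 y xM P1 \<ge> 0" and e2: "Eform F G A x1 y xN P2 \<ge> 0"
    and e3: "Eform F G A x1 xM xN SM \<ge> 0" and e4: "Eform F G A x1 xN xN SN \<ge> 0"
    and c1: "SM \<ge> 1/2*(A-1)*(norm (G xM))\<^sup>2 - G xM \<bullet> (x1 - xN)"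
    and c2: "SN \<ge> 1/2*(A-1)*(norm (G xN))\<^sup>2 - G xN \<bullet> (x1 - xN)"
    and q1: "F xN + G xN \<bullet> (xM - xN) + 1/2*(norm (G xM - G xN))\<^sup>2 \<le> F xM"
    and q2: "F xM + G xM \<bullet> (xN - xM) + 1/2*(norm (G xN - G xM))\<^sup>2 \<le> F xN"
  shows "Eform F G (r*A) x0 y xN (P1 + a * Qf F G y xM + P2) \<ge> 0"
proof -
  have A: "A \<ge> 0" using AB B rho by simp
  have id: "Eform F G (r*A) x0 y xN (P1 + a * Qf F G y xM + P2)
    = Eform F G A x0 y xM P1 + Eform F G A x1 y xN P2
    + r * Eform F G A x1 xM xN SM + r * Eform F G A x1 xN xN SN
    + r * (SM - (1/2*(A-1)*(norm (G xM))\<^sup>2 - G xM \<bullet> (x1 - xN)))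
    + r * (SN - (1/2*(A-1)*(norm (G xN))\<^sup>2 - G xN \<bullet> (x1 - xN)))
    + r * (F xM - (F xN + G xN \<bullet> (xM - xN) + 1/2*(norm (G xM - G xN))\<^sup>2))
    + A * (F xN - (F xM + G xM \<bullet> (xN - xM) + 1/2*(norm (G xN - G xM))\<^sup>2))"
    by (rule glue_id) (rule rho(1) AB aB x1)+
  show ?thesis
    unfolding id
    using e1 e2 e3 e4 c1 c2 q1 q2 rho(2) A
    by (intro add_nonneg_nonneg mult_nonneg_nonneg) auto
qed

lemma base_id:
  fixes F :: "'a::real_inner \<Rightarrow> real" and G :: "'a \<Rightarrow> 'a"
  assumes r: "r^2 = 2" and x1: "x1 = x0 - r *\<^sub>R G x0"
  shows "Eform F G (1 + r) x0 y x1 (r * Qf F G y x0)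
     = (1 + r) * (F x0 - (F x1 + G x1 \<bullet> (x0 - x1) + 1/2*(norm (G x0 - G x1))\<^sup>2))
       + (F x1 - (F x0 + G x0 \<bullet> (x1 - x0) + 1/2*(norm (G x1 - G x0))\<^sup>2))"
proof -
  have rr: "r * r = 2" using r by (simp add: power2_eq_square)
  have rr2: "r * (r * z) = 2 * z" for z using rr by (metis mult.assoc)
  obtain g1 f1 where g1: "G x1 = g1" and f1: "F x1 = f1" by blast
  show ?thesis
    unfolding Eform_def Qf_def g1 f1
    unfolding x1
    apply (simp add: power2_norm_eq_inner inner_diff_left inner_diff_right inner_add_left inner_add_right inner_commute power_mult_distrib power2_abs)
    apply (simp add: algebra_simps rr2)
    apply (simp add: field_simps)
    done
qed



definition Ek :: "('a::euclidean_space \<Rightarrow> real) \<Rightarrow> ('a \<Rightarrow> 'a) \<Rightarrow> nat \<Rightarrow> 'a \<Rightarrow> 'a \<Rightarrow> real" where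
  "Ek F G k x0 y = Eform F G (silver_ratio^k) x0 y (gd_iter G (silver_schedule k) x0 (2^k-1))
     (\<Sum>i<2^k-1. silver_schedule k ! i * Qf F G y (gd_iter G (silver_schedule k) x0 i))"

lemma sum_split: "(\<Sum>i<m+n. f i) = (\<Sum>i<m. f i) + (\<Sum>i<n. f (m+i))" for f :: "nat \<Rightarrow> real"
  by (induction n) auto

context
  fixes F :: "'a::euclidean_space \<Rightarrow> real" and G :: "'a \<Rightarrow> 'a"
  assumes convex: "convex_on UNIV F"
    and grad: "\<And>x. (F has_derivative (\<lambda>h. G x \<bullet> h)) (at x)"
    and smooth: "\<And>x y. norm (G x - G y) \<le> norm (x - y)"
begin

lemma cc: "F x + G x \<bullet> (y - x) + 1/2 * (norm (G y - G x))\<^sup>2 \<le> F y"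
  by (rule coco[OF convex grad smooth])

lemma qf_lb: "Qf F G z w \<ge> 1/2 * (norm (G z))\<^sup>2 - G z \<bullet> G w"
proof -
  have c: "F w + G w \<bullet> (z - w) + 1/2 * (norm (G z - G w))\<^sup>2 \<le> F z" by (rule cc)
  have "(norm (G z - G w))\<^sup>2 = (norm (G z))\<^sup>2 - 2 * (G z \<bullet> G w) + (norm (G w))\<^sup>2"
    by (simp add: power2_norm_eq_inner inner_diff_left inner_diff_right inner_commute)
  with c show ?thesis unfolding Qf_def by linarith
qed

lemma csum:
  assumes k: "k \<ge> 1"
  shows "(\<Sum>j<2^k-1. silver_schedule k ! j * Qf F G z (gd_iter G (silver_schedule k) x1 j))
     \<ge> 1/2 * (silver_ratio^k - 1) * (norm (G z))\<^sup>2
        - G z \<bullet> (x1 - gd_iter G (silver_schedule k) x1 (2^k-1))"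
proof -
  define s where "s = silver_schedule k"
  define M :: nat where "M = 2^k - 1"
  define xb where "xb = gd_iter G s x1"
  have len: "length s = M" unfolding s_def M_def using sched_len[OF k] .
  have pos: "j < M \<Longrightarrow> s ! j \<ge> 0" for j
    using sched_pos[of "s ! j" k] len unfolding s_def by (auto intro: less_imp_le)
  have "(\<Sum>j<M. s ! j * Qf F G z (xb j)) \<ge> (\<Sum>j<M. s ! j * (1/2 * (norm (G z))\<^sup>2 - G z \<bullet> G (xb j)))"
    by (rule sum_mono) (use pos qf_lb in \<open>auto intro: mult_left_mono\<close>)
  also have "(\<Sum>j<M. s ! j * (1/2 * (norm (G z))\<^sup>2 - G z \<bullet> G (xb j)))
      = 1/2 * (\<Sum>j<M. s ! j) * (norm (G z))\<^sup>2 - G z \<bullet> (\<Sum>j<M. s ! j *\<^sub>R G (xb j))"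
    by (simp add: algebra_simps sum_subtractf sum_distrib_left sum_distrib_right inner_sum_right)
  also have "(\<Sum>j<M. s ! j) = silver_ratio^k - 1"
    using sched_sum[OF k] sum_list_sum_nth[of s] len unfolding s_def by (simp add: atLeast0LessThan)
  also have "(\<Sum>j<M. s ! j *\<^sub>R G (xb j)) = x1 - xb M"
    unfolding xb_def by (rule gd_tele[symmetric])
  finally show ?thesis unfolding s_def M_def xb_def .
qed

lemma base1: "Ek F G 1 x0 y \<ge> 0"
proof -
  define x1 where "x1 = x0 - sqrt 2 *\<^sub>R G x0"
  have "Ek F G 1 x0 y = Eform F G (1 + sqrt 2) x0 y x1 (sqrt 2 * Qf F G y x0)"
    by (simp add: Ek_def silver_ratio_def x1_def)
  also have "\<dots> = (1 + sqrt 2) * (F x0 - (F x1 + G x1 \<bullet> (x0 - x1) + 1/2*(norm (G x0 - G x1))\<^sup>2))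
       + (F x1 - (F x0 + G x0 \<bullet> (x1 - x0) + 1/2*(norm (G x1 - G x0))\<^sup>2))"
    by (rule base_id) (simp_all add: x1_def)
  also have "\<dots> \<ge> 0"
    using cc[of x1 x0] cc[of x0 x1] by (intro add_nonneg_nonneg mult_nonneg_nonneg) auto
  finally show ?thesis .
qed

lemma main: "k \<ge> 1 \<Longrightarrow> Ek F G k x0 y \<ge> 0"
proof (induction k arbitrary: x0 y rule: nat_induct_at_least)
  case base
  then show ?case by (rule base1)
next
  case (Suc k)
  note k = Suc.hyps and IH = Suc.IH
  define s where "s = silver_schedule k"
  define M :: nat where "M = 2^k - 1"
  define A where "A = silver_ratio ^ k"
  define B where "B = silver_ratio ^ (k - 1)"
  define a where "a = 1 + B"
  define r where "r = silver_ratio"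
  define xa where "xa = gd_iter G s x0"
  define x1 where "x1 = xa M - a *\<^sub>R G (xa M)"
  define xb where "xb = gd_iter G s x1"
  define hs where "hs = silver_schedule (Suc k)"
  define x where "x = gd_iter G hs x0"
  have len: "length s = M" unfolding s_def M_def using sched_len[OF k] .
  have hs: "hs = s @ [a] @ s" unfolding hs_def s_def a_def B_def using sched_Suc[OF k] by simp
  have pk: "(2::nat)^k \<ge> 1" by simp
  have NN: "2 ^ Suc k - 1 = Suc M + M" unfolding M_def using pk by simp
  have xlow: "i \<le> M \<Longrightarrow> x i = xa i" for i
    unfolding x_def xa_def hs using gd_app1[of i s G "[a] @ s" x0] len by simp
  have hs2: "hs = (s @ [a]) @ s" using hs by simp
  have x1': "gd_iter G (s @ [a]) x0 (Suc M) = x1"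
    using gd_app1[of M s G "[a]" x0] len unfolding x1_def xa_def by (simp add: nth_append)
  have xhigh: "x (Suc M + j) = xb j" for j
    unfolding x_def xb_def hs2 using gd_app2[of G "s @ [a]" s x0 j] len x1' by simp
  have xhigh': "x (Suc (M + j)) = xb j" for j using xhigh[of j] by simp
  define Q where "Q z = Qf F G y z" for z
  define P1 where "P1 = (\<Sum>i<M. s ! i * Q (xa i))"
  define P2 where "P2 = (\<Sum>j<M. s ! j * Q (xb j))"
  have sumeq: "(\<Sum>i<Suc M + M. hs ! i * Q (x i)) = P1 + a * Q (xa M) + P2"
  proof -
    have "(\<Sum>i<Suc M + M. hs ! i * Q (x i)) = (\<Sum>i<Suc M. hs ! i * Q (x i)) + (\<Sum>j<M. hs ! (Suc M + j) * Q (x (Suc M + j)))"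
      by (rule sum_split)
    also have "(\<Sum>i<Suc M. hs ! i * Q (x i)) = (\<Sum>i<M. hs ! i * Q (x i)) + hs ! M * Q (x M)"
      by simp
    also have "(\<Sum>i<M. hs ! i * Q (x i)) = P1"
      unfolding P1_def by (rule sum.cong) (auto simp: xlow hs nth_append len)
    also have "hs ! M * Q (x M) = a * Q (xa M)" by (simp add: xlow hs nth_append len)
    also have "(\<Sum>j<M. hs ! (Suc M + j) * Q (x (Suc M + j))) = P2"
      unfolding P2_def by (rule sum.cong) (auto simp: xhigh' hs2 nth_append len)
    finally show ?thesis by simp
  qed
  have lhs: "Ek F G (Suc k) x0 y = Eform F G (r * A) x0 y (xb M) (P1 + a * Qf F G y (xa M) + P2)"
  proof -
    have "Ek F G (Suc k) x0 y = Eform F G (r * A) x0 y (x (Suc M + M)) (\<Sum>i<Suc M + M. hs ! i * Q (x i))"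
      unfolding Ek_def NN by (simp add: r_def A_def x_def hs_def Q_def)
    then show ?thesis using sumeq xhigh[of M] by (simp add: Q_def)
  qed
  have e1: "Eform F G A x0 y (xa M) P1 \<ge> 0"
    using IH[of x0 y] by (simp add: Ek_def A_def xa_def M_def P1_def Q_def s_def)
  have e2: "Eform F G A x1 y (xb M) P2 \<ge> 0"
    using IH[of x1 y] by (simp add: Ek_def A_def xb_def M_def P2_def Q_def s_def)
  have e3: "Eform F G A x1 (xa M) (xb M) (\<Sum>j<M. s ! j * Qf F G (xa M) (xb j)) \<ge> 0"
    using IH[of x1 "xa M"] by (simp add: Ek_def A_def xb_def M_def s_def)
  have e4: "Eform F G A x1 (xb M) (xb M) (\<Sum>j<M. s ! j * Qf F G (xb M) (xb j)) \<ge> 0"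
    using IH[of x1 "xb M"] by (simp add: Ek_def A_def xb_def M_def s_def)
  have c1: "(\<Sum>j<M. s ! j * Qf F G (xa M) (xb j)) \<ge> 1/2*(A-1)*(norm (G (xa M)))\<^sup>2 - G (xa M) \<bullet> (x1 - xb M)"
    using csum[OF k, of "xa M" x1] by (simp add: A_def xb_def M_def s_def)
  have c2: "(\<Sum>j<M. s ! j * Qf F G (xb M) (xb j)) \<ge> 1/2*(A-1)*(norm (G (xb M)))\<^sup>2 - G (xb M) \<bullet> (x1 - xb M)"
    using csum[OF k, of "xb M" x1] by (simp add: A_def xb_def M_def s_def)
  have rho: "r^2 = 2*r + 1" "r \<ge> 0" unfolding r_def using rho_sq rho_gt1 by auto
  have AB: "A = r * B" unfolding A_def B_def r_def using k
    by (metis Suc_diff_1 le_eq_less_or_eq less_one not_less power_Suc zero_less_one less_le_trans)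
  have Bnn: "B \<ge> 0" unfolding B_def using rho_gt1 by simp
  show ?case unfolding lhs
    by (rule glue[OF rho AB a_def Bnn x1_def e1 e2 e3 e4 c1 c2 cc cc])
qed

end

theorem lemma1:
  fixes F :: "'a::euclidean_space \<Rightarrow> real"
    and G :: "'a \<Rightarrow> 'a"
    and xstar x0 :: 'a
    and k :: nat
  assumes convex: "convex_on UNIV F"
    and grad: "\<And>x. (F has_derivative (\<lambda>h. G x \<bullet> h)) (at x)"
    and smooth: "\<And>x y. norm (G x - G y) \<le> norm (x - y)"
    and minimizer: "\<And>y. F xstar \<le> F y"
    and k: "k \<ge> 1"
  shows
    "let N = 2 ^ k - 1;
         h = silver_schedule k;
         \<rho> = silver_ratio;
         x = gd_iter G h x0;
         Fstar = F xstar;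
         Q = (\<lambda>i. Fstar - F (x i) - G (x i) \<bullet> (xstar - x i)
                   - (1/2) * (norm (G (x i)))\<^sup>2)
     in (2 * \<rho> ^ k - 1) * (Fstar - F (x N)) + (1/2) * (norm (x0 - xstar))\<^sup>2
        - (\<Sum>i<N. h ! i * Q i) - \<rho> ^ k * Q N
        - (1/2) * (norm (x N - \<rho> ^ k *\<^sub>R G (x N) - xstar))\<^sup>2 \<ge> 0"
  using main[OF convex grad smooth k, of x0 xstar]
  unfolding Ek_def Eform_def Qf_def Let_def by simp

end
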